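(* Let $G$ be a compact connected Lie group and, for $p\ge1$, $g\ge0$, $T>0$, let $Z_{p,g,T}$ be the function on $G^p$ $$Z_{p,g,T}(x_1,\ldots,x_p)=\int_{G^{2g+p}}p_T\big(y_1^{-1}x_1y_1\cdots y_p^{-1}x_py_p[a_1,b_1]\cdots[a_g,b_g]\big)\,da_1db_1\cdots da_gdb_g\,dy_1\cdots dy_p,$$ with $[a,b]=aba^{-1}b^{-1}$. Then for all $T,T'>0$, $x_1,\ldots,x_{p-1},x\in G$, $$\big(e^{T\Delta/2}Z_{p,g,T'}(x_1,\ldots,x_{p-1},\cdot)\big)(x)=Z_{p,g,T+T'}(x_1,\ldots,x_{p-1},x).$$
   Context: $G$ has normalized Haar measure, a biinvariant Riemannian metric of volume 1 with Laplacian $\Delta$, and heat kernel $(p_t)_{t>0}$: positive smooth central functions with $(\partial_t-\frac12\Delta)p_t=0$ and $p_t\,dg\to\delta_1$ as $t\to0$. $e^{T\Delta/2}$ is the heat semigroup acting on functions of the last variable. *)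

theory Defs
  imports "HOL-Probability.Probability"
begin

text \<open>Compact connected Lie groups are realised as compact connected subgroups of the unit
group of a finite-dimensional real Banach algebra (e.g. a matrix algebra).\<close>

definition ginv :: "'a::ring_1 \<Rightarrow> 'a" where
  "ginv x = (THE y. x * y = 1 \<and> y * x = 1)"

definition subgroup_of_units :: "'a::ring_1 set \<Rightarrow> bool" where
  "subgroup_of_units G \<longleftrightarrow> 1 \<in> G \<and> (\<forall>x\<in>G. \<forall>y\<in>G. x * y \<in> G)
     \<and> (\<forall>x\<in>G. \<exists>y\<in>G. x * y = 1 \<and> y * x = 1)"

definition compact_connected_lie_group :: "'a::{real_normed_algebra_1,banach} set \<Rightarrow> bool" where
  "compact_connected_lie_group G \<longleftrightarrow> (\<exists>S::'a set. finite S \<and> span S = UNIV)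
     \<and> subgroup_of_units G \<and> compact G \<and> connected G"

definition lie_alg :: "'a::{real_normed_algebra_1,banach} set \<Rightarrow> 'a set" where
  "lie_alg G = {X. \<forall>t::real. exp (t *\<^sub>R X) \<in> G}"

definition haar_prob :: "'a::{real_normed_algebra_1,banach} set \<Rightarrow> 'a measure \<Rightarrow> bool" where
  "haar_prob G \<mu> \<longleftrightarrow> space \<mu> = G \<and> sets \<mu> = sets (restrict_space borel G) \<and> prob_space \<mu>
     \<and> (\<forall>g\<in>G. \<forall>A\<in>sets \<mu>. emeasure \<mu> ((\<lambda>x. g * x) ` A) = emeasure \<mu> A)"

text \<open>Bi-invariant Riemannian metric = Ad-invariant inner product on the Lie algebra.\<close>
definition biinv_metric :: "'a::{real_normed_algebra_1,banach} set \<Rightarrow> ('a \<Rightarrow> 'a \<Rightarrow> real) \<Rightarrow> bool" where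
  "biinv_metric G B \<longleftrightarrow>
     (\<forall>X\<in>lie_alg G. \<forall>Y\<in>lie_alg G. B X Y = B Y X)
   \<and> (\<forall>X\<in>lie_alg G. \<forall>Y\<in>lie_alg G. \<forall>Z\<in>lie_alg G. \<forall>c::real.
        B (X + Y) Z = B X Z + B Y Z \<and> B (c *\<^sub>R X) Z = c * B X Z)
   \<and> (\<forall>X\<in>lie_alg G. X \<noteq> 0 \<longrightarrow> B X X > 0)
   \<and> (\<forall>g\<in>G. \<forall>X\<in>lie_alg G. \<forall>Y\<in>lie_alg G. B (g * X * ginv g) (g * Y * ginv g) = B X Y)"

definition orthonormal_basis :: "'a::{real_normed_algebra_1,banach} set \<Rightarrow> ('a \<Rightarrow> 'a \<Rightarrow> real)
     \<Rightarrow> (nat \<Rightarrow> 'a) \<Rightarrow> nat \<Rightarrow> bool" where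
  "orthonormal_basis G B E n \<longleftrightarrow> (\<forall>i<n. E i \<in> lie_alg G)
     \<and> (\<forall>i<n. \<forall>j<n. B (E i) (E j) = (if i = j then 1 else 0))
     \<and> lie_alg G \<subseteq> span (E ` {..<n})"

text \<open>The Riemannian volume of G equals 1: since the Riemannian volume is a bi-invariant
measure it is vol(G) times the Haar probability; in exponential (orthonormal) coordinates
near the identity it is asymptotic to Lebesgue measure, so vol(G) = 1 iff the ratio below
tends to 1.\<close>
definition volume_one :: "'a::{real_normed_algebra_1,banach} measure \<Rightarrow> (nat \<Rightarrow> 'a) \<Rightarrow> nat \<Rightarrow> bool" where
  "volume_one \<mu> E n \<longleftrightarrow>
     ((\<lambda>r. measure \<mu> ((\<lambda>c. exp (\<Sum>i<n. c i *\<^sub>R E i)) ` {c. (\<Sum>i<n. (c i)\<^sup>2) < r\<^sup>2})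
            / (unit_ball_vol (real n) * r ^ n)) \<longlongrightarrow> 1) (at_right 0)"

definition lie_deriv :: "'a::{real_normed_algebra_1,banach} \<Rightarrow> ('a \<Rightarrow> real) \<Rightarrow> 'a \<Rightarrow> real" where
  "lie_deriv X f x = deriv (\<lambda>s. f (x * exp (s *\<^sub>R X))) 0"

definition laplacian :: "(nat \<Rightarrow> 'a::{real_normed_algebra_1,banach}) \<Rightarrow> nat \<Rightarrow> ('a \<Rightarrow> real) \<Rightarrow> 'a \<Rightarrow> real" where
  "laplacian E n f x = (\<Sum>i<n. lie_deriv (E i) (lie_deriv (E i) f) x)"

text \<open>Iterated partial derivatives of a function of (t,x): None = d/dt, Some X = left-invariant X.\<close>
fun hderiv :: "'a::{real_normed_algebra_1,banach} option list \<Rightarrow> (real \<Rightarrow> 'a \<Rightarrow> real) \<Rightarrow> real \<Rightarrow> 'a \<Rightarrow> real" where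
  "hderiv [] F = F"
| "hderiv (d # ds) F = (\<lambda>t x. case d of
      None \<Rightarrow> deriv (\<lambda>s. hderiv ds F s x) t
    | Some X \<Rightarrow> deriv (\<lambda>s. hderiv ds F t (x * exp (s *\<^sub>R X))) 0)"

definition smooth_on_time_G :: "'a::{real_normed_algebra_1,banach} set \<Rightarrow> (real \<Rightarrow> 'a \<Rightarrow> real) \<Rightarrow> bool" where
  "smooth_on_time_G G F \<longleftrightarrow> (\<forall>ds. set ds \<subseteq> insert None (Some ` lie_alg G) \<longrightarrow>
      continuous_on ({0<..} \<times> G) (\<lambda>(t, x). hderiv ds F t x)
    \<and> (\<forall>t>0. \<forall>x\<in>G. (\<lambda>s. hderiv ds F s x) differentiable (at t)
         \<and> (\<forall>X\<in>lie_alg G. (\<lambda>s. hderiv ds F t (x * exp (s *\<^sub>R X))) differentiable (at 0))))"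

definition heat_kernel :: "'a::{real_normed_algebra_1,banach} set \<Rightarrow> 'a measure \<Rightarrow> (nat \<Rightarrow> 'a) \<Rightarrow> nat
     \<Rightarrow> (real \<Rightarrow> 'a \<Rightarrow> real) \<Rightarrow> bool" where
  "heat_kernel G \<mu> E n p \<longleftrightarrow>
     (\<forall>t>0. \<forall>x\<in>G. p t x > 0)
   \<and> (\<forall>t>0. \<forall>g\<in>G. \<forall>x\<in>G. p t (g * x * ginv g) = p t x)
   \<and> smooth_on_time_G G p
   \<and> (\<forall>t>0. \<forall>x\<in>G. ((\<lambda>s. p s x) has_real_derivative (1/2) * laplacian E n (p t) x) (at t))
   \<and> (\<forall>f. continuous_on G f \<longrightarrow>
        ((\<lambda>t. \<integral>x. p t x * f x \<partial>\<mu>) \<longlongrightarrow> f 1) (at_right 0))"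

text \<open>Heat semigroup e^{T\<Delta>/2} acting by its kernel.\<close>
definition heat_sg :: "'a::{real_normed_algebra_1,banach} measure \<Rightarrow> (real \<Rightarrow> 'a \<Rightarrow> real) \<Rightarrow> real
     \<Rightarrow> ('a \<Rightarrow> real) \<Rightarrow> 'a \<Rightarrow> real" where
  "heat_sg \<mu> p T f x = (\<integral>y. p T (ginv x * y) * f y \<partial>\<mu>)"

definition gcomm :: "'a::ring_1 \<Rightarrow> 'a \<Rightarrow> 'a" where
  "gcomm a b = a * b * ginv a * ginv b"

text \<open>Z_{p,g,T}(x_1..x_p), p = length xs. Integration variables w: a_i = w(2i), b_i = w(2i+1)
for i<g, y_j = w(2g+j) for j<p.\<close>
definition Zfun :: "'a::{real_normed_algebra_1,banach} measure \<Rightarrow> (real \<Rightarrow> 'a \<Rightarrow> real) \<Rightarrow> nat \<Rightarrow> real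
     \<Rightarrow> 'a list \<Rightarrow> real" where
  "Zfun \<mu> p g T xs = (\<integral>w. p T (prod_list
       (map (\<lambda>j. ginv (w (2*g+j)) * xs ! j * w (2*g+j)) [0..<length xs]
        @ map (\<lambda>i. gcomm (w (2*i)) (w (2*i+1))) [0..<g]))
     \<partial>(Pi\<^sub>M {..<2*g + length xs} (\<lambda>_. \<mu>)))"

end

theory Submission
  imports Defs
begin



lemma deriv_integral:
  fixes F D :: "real \<Rightarrow> 'b::metric_space \<Rightarrow> real"
  assumes fin: "finite_measure M" and K: "compact (space M)"
   and ab: "a < t" "t < b"
   and der: "\<And>s y. s \<in> {a..b} \<Longrightarrow> y \<in> space M \<Longrightarrow> ((\<lambda>s. F s y) has_real_derivative D s y) (at s)"
   and cont: "continuous_on ({a..b} \<times> space M) (\<lambda>(s,y). D s y)"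
   and intF: "\<And>s. s\<in>{a..b} \<Longrightarrow> integrable M (F s)"
   and intD: "integrable M (D t)"
  shows "((\<lambda>s. \<integral>y. F s y \<partial>M) has_real_derivative (\<integral>y. D t y \<partial>M)) (at t)"
proof -
  interpret finite_measure M by fact
  define m where "m = measure M (space M)"
  have m0: "m \<ge> 0" unfolding m_def by simp
  have uc: "uniformly_continuous_on ({a..b} \<times> space M) (\<lambda>(s,y). D s y)"
    by (rule compact_uniformly_continuous[OF cont compact_Times[OF compact_Icc K]])
  show ?thesis unfolding DERIV_def
  proof (rule tendstoI)
    fix e :: real assume e: "e > 0"
    define e' where "e' = e / (2 * (m + 1))"
    have e': "e' > 0" using e m0 by (simp add: e'_def)
    obtain d where d: "d > 0" and dd: "\<And>x x'. x \<in> {a..b} \<times> space M \<Longrightarrow> x' \<in> {a..b} \<times> space M \<Longrightarrow>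
        dist x' x < d \<Longrightarrow> dist ((\<lambda>(s,y). D s y) x') ((\<lambda>(s,y). D s y) x) < e'"
      using uc e' unfolding uniformly_continuous_on_def by metis
    define d' where "d' = min d (min (t - a) (b - t))"
    have d': "d' > 0" using d ab by (simp add: d'_def)
    have pt: "\<bar>(F (t+h) y - F t y) / h - D t y\<bar> < e'"
      if h: "h \<noteq> 0" "\<bar>h\<bar> < d'" and y: "y \<in> space M" for h y
    proof -
      have "\<exists>z. \<bar>z - t\<bar> < \<bar>h\<bar> \<and> (F (t+h) y - F t y) = h * D z y"
      proof (cases "h > 0")
        case True
        have "\<exists>z>t. z < t + h \<and> F (t+h) y - F t y = (t + h - t) * D z y"
          apply (rule MVT2[where f="\<lambda>s. F s y"])
          using True apply simp
          apply (rule der) using h y unfolding d'_def by auto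
        then obtain z where "z > t" "z < t + h" "F (t+h) y - F t y = (t + h - t) * D z y" by blast
        then show ?thesis using True by (intro exI[of _ z]) auto
      next
        case False
        then have hn: "h < 0" using h by simp
        have "\<exists>z>t+h. z < t \<and> F t y - F (t+h) y = (t - (t + h)) * D z y"
          apply (rule MVT2[where f="\<lambda>s. F s y"])
          using hn apply simp
          apply (rule der) using h y hn unfolding d'_def by auto
        then obtain z where "z > t + h" "z < t" "F t y - F (t+h) y = (t - (t + h)) * D z y" by blast
        then show ?thesis using hn by (intro exI[of _ z]) (auto simp: algebra_simps)
      qed
      then obtain z where z: "\<bar>z - t\<bar> < \<bar>h\<bar>" "F (t+h) y - F t y = h * D z y" by blast
      have zab: "z \<in> {a..b}" using z h unfolding d'_def by auto
      have tab: "t \<in> {a..b}" using ab by auto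
      have "dist (z, y) (t, y) < d" using z h unfolding d'_def by (simp add: dist_Pair_Pair dist_real_def)
      then have "dist (D z y) (D t y) < e'" using dd[of "(t,y)" "(z,y)"] zab tab y by auto
      then show ?thesis using z h by (simp add: dist_real_def)
    qed
    show "\<forall>\<^sub>F h in at 0. dist (((\<integral>y. F (t + h) y \<partial>M) - (\<integral>y. F t y \<partial>M)) / h) (\<integral>y. D t y \<partial>M) < e"
    proof -
      have "\<forall>\<^sub>F h in at 0. h \<noteq> 0 \<and> \<bar>h\<bar> < d'"
        using d' unfolding eventually_at by (auto intro!: exI[of _ d'] simp: dist_real_def)
      then show ?thesis
      proof (rule eventually_mono)
        fix h assume h: "h \<noteq> 0 \<and> \<bar>h\<bar> < d'"
        have th: "t + h \<in> {a..b}" "t \<in> {a..b}" using h ab unfolding d'_def by auto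
        have int: "integrable M (\<lambda>y. (F (t+h) y - F t y) / h - D t y)"
          using intF[OF th(1)] intF[OF th(2)] intD by auto
        have eq: "((\<integral>y. F (t + h) y \<partial>M) - (\<integral>y. F t y \<partial>M)) / h - (\<integral>y. D t y \<partial>M)
           = (\<integral>y. (F (t+h) y - F t y) / h - D t y \<partial>M)"
          using intF[OF th(1)] intF[OF th(2)] intD
          by (simp add: Bochner_Integration.integral_diff diff_divide_distrib)
        have "\<bar>\<integral>y. (F (t+h) y - F t y) / h - D t y \<partial>M\<bar> \<le> (\<integral>y. \<bar>(F (t+h) y - F t y) / h - D t y\<bar> \<partial>M)"
          by (rule integral_abs_bound)
        also have "\<dots> \<le> (\<integral>y. e' \<partial>M)"
          apply (rule integral_mono)
          using int apply auto[1]
          apply simp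
          using pt h by (simp add: less_imp_le)
        also have "\<dots> = m * e'" by (simp add: m_def)
        also have "\<dots> < e" using e m0 unfolding e'_def by (simp add: field_simps) (smt (verit) mult_nonneg_nonneg)
        finally show "dist (((\<integral>y. F (t + h) y \<partial>M) - (\<integral>y. F t y \<partial>M)) / h) (\<integral>y. D t y \<partial>M) < e"
          using eq by (simp add: dist_real_def)
      qed
    qed
  qed
qed




primrec rnd :: "'a::metric_space list \<Rightarrow> real \<Rightarrow> 'a \<Rightarrow> nat" where
  "rnd [] e x = 0"
| "rnd (c # cs) e x = (if dist x c < e then 0 else Suc (rnd cs e x))"

lemma rnd_prop: "(\<exists>c\<in>set cs. dist x c < e) \<Longrightarrow> rnd cs e x < length cs \<and> dist x (cs ! rnd cs e x) < e"
  by (induction cs) auto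

lemma rnd_meas: "rnd cs e \<in> borel \<rightarrow>\<^sub>M count_space UNIV"
proof (induction cs)
  case Nil
  then show ?case by simp
next
  case (Cons c cs)
  have "{x::'a. dist x c < e} = ball c e" by (auto simp: ball_def dist_commute)
  then have "{x \<in> space borel. dist x c < e} \<in> sets borel" by simp
  moreover have "(\<lambda>x. Suc (rnd cs e x)) \<in> borel \<rightarrow>\<^sub>M count_space UNIV"
    using measurable_compose[OF Cons measurable_count_space[of Suc UNIV]] by (simp add: comp_def)
  ultimately have "(\<lambda>x. if dist x c < e then 0 else Suc (rnd cs e x)) \<in> borel \<rightarrow>\<^sub>M count_space UNIV"
    by (intro measurable_If) auto
  then show ?case by simp
qed

lemma measurable_map_list:
  fixes h :: "nat \<Rightarrow> 'b \<Rightarrow> nat"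
  assumes "\<And>j. j < K \<Longrightarrow> h j \<in> M \<rightarrow>\<^sub>M count_space UNIV"
  shows "(\<lambda>\<omega>. map (\<lambda>j. h j \<omega>) [0..<K]) \<in> M \<rightarrow>\<^sub>M count_space UNIV"
proof (subst measurable_count_space_eq2_countable, intro conjI ballI)
  show "(\<lambda>\<omega>. map (\<lambda>j. h j \<omega>) [0..<K]) \<in> space M \<rightarrow> UNIV" by simp
  fix l :: "nat list"
  show "(\<lambda>\<omega>. map (\<lambda>j. h j \<omega>) [0..<K]) -` {l} \<inter> space M \<in> sets M"
  proof (cases "length l = K")
    case True
    have "(\<lambda>\<omega>. map (\<lambda>j. h j \<omega>) [0..<K]) -` {l} \<inter> space M = {\<omega> \<in> space M. \<forall>j\<in>{..<K}. h j \<omega> = l ! j}"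
    proof (intro equalityI subsetI)
      fix \<omega> assume "\<omega> \<in> (\<lambda>\<omega>. map (\<lambda>j. h j \<omega>) [0..<K]) -` {l} \<inter> space M"
      then have "map (\<lambda>j. h j \<omega>) [0..<K] = l" "\<omega> \<in> space M" by auto
      then show "\<omega> \<in> {\<omega> \<in> space M. \<forall>j\<in>{..<K}. h j \<omega> = l ! j}" by auto
    next
      fix \<omega> assume "\<omega> \<in> {\<omega> \<in> space M. \<forall>j\<in>{..<K}. h j \<omega> = l ! j}"
      then have "\<forall>j<K. h j \<omega> = l ! j" "\<omega> \<in> space M" by auto
      then have "map (\<lambda>j. h j \<omega>) [0..<K] = l" using True by (simp add: list_eq_iff_nth_eq)
      then show "\<omega> \<in> (\<lambda>\<omega>. map (\<lambda>j. h j \<omega>) [0..<K]) -` {l} \<inter> space M" using \<open>\<omega> \<in> space M\<close> by auto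
    qed
    also have "\<dots> \<in> sets M"
    proof (rule sets.sets_Collect_finite_All)
      fix j assume "j \<in> {..<K}"
      then have "h j \<in> M \<rightarrow>\<^sub>M count_space UNIV" using assms by auto
      then have "h j -` {l ! j} \<inter> space M \<in> sets M"
        unfolding measurable_count_space_eq2_countable by blast
      moreover have "{\<omega> \<in> space M. h j \<omega> = l ! j} = h j -` {l ! j} \<inter> space M" by auto
      ultimately show "{\<omega> \<in> space M. h j \<omega> = l ! j} \<in> sets M" by simp
    next
      show "finite {..<K}" by simp
    qed
    finally show ?thesis .
  next
    case False
    then have "(\<lambda>\<omega>. map (\<lambda>j. h j \<omega>) [0..<K]) -` {l} \<inter> space M = {}" by (auto dest: arg_cong[where f=length])
    then show ?thesis by simp
  qed
qed

lemma meas_cont: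
  fixes f :: "nat \<Rightarrow> 'b \<Rightarrow> 'a::metric_space" and \<Phi> :: "(nat \<Rightarrow> 'a) \<Rightarrow> real"
  assumes G: "compact G"
    and f: "\<And>j. j < K \<Longrightarrow> f j \<in> M \<rightarrow>\<^sub>M borel"
    and fG: "\<And>j \<omega>. j < K \<Longrightarrow> \<omega> \<in> space M \<Longrightarrow> f j \<omega> \<in> G"
    and \<Phi>: "\<And>c v. (\<And>j k. j < K \<Longrightarrow> c k j \<in> G) \<Longrightarrow> (\<And>j. j < K \<Longrightarrow> v j \<in> G)
              \<Longrightarrow> (\<And>j. j < K \<Longrightarrow> (\<lambda>k. c k j) \<longlonglongrightarrow> v j) \<Longrightarrow> (\<lambda>k. \<Phi> (c k)) \<longlonglongrightarrow> \<Phi> v"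
  shows "(\<lambda>\<omega>. \<Phi> (\<lambda>j. f j \<omega>)) \<in> borel_measurable M"
proof -
  define e where "e k = inverse (real (Suc k))" for k
  have e0: "e k > 0" for k by (simp add: e_def)
  have "\<exists>cs. set cs \<subseteq> G \<and> (\<forall>x\<in>G. \<exists>c\<in>set cs. dist x c < e k)" for k
  proof -
    have "G \<subseteq> (\<Union>c\<in>G. ball c (e k))" using e0 by auto
    then obtain D where D: "D \<subseteq> G" "finite D" "G \<subseteq> (\<Union>c\<in>D. ball c (e k))"
      using compactE_image[OF G, of G "\<lambda>c. ball c (e k)"] by auto
    obtain cs where "set cs = D" using D(2) finite_list by blast
    moreover have "\<exists>c\<in>set cs. dist x c < e k" if "x \<in> G" for x
    proof -
      from that D(3) obtain c where "c \<in> D" "x \<in> ball c (e k)" by blast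
      then show ?thesis using \<open>set cs = D\<close> by (auto simp: dist_commute)
    qed
    ultimately show ?thesis using D by auto
  qed
  then obtain CS where CS: "\<And>k. set (CS k) \<subseteq> G" "\<And>k x. x \<in> G \<Longrightarrow> \<exists>c\<in>set (CS k). dist x (c) < e k"
    by metis
  define \<Psi> where "\<Psi> k l = \<Phi> (\<lambda>j. if j < K then CS k ! (l ! j) else undefined)" for k l
  define c where "c k \<omega> = (\<lambda>j. if j < K then CS k ! rnd (CS k) (e k) (f j \<omega>) else undefined)" for k \<omega>
  show ?thesis
  proof (rule borel_measurable_LIMSEQ_real[where u="\<lambda>k \<omega>. \<Phi> (c k \<omega>)"])
    fix k
    have eq: "\<Phi> (c k \<omega>) = \<Psi> k (map (\<lambda>j. rnd (CS k) (e k) (f j \<omega>)) [0..<K])" for \<omega>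
      unfolding \<Psi>_def c_def by (rule arg_cong[where f=\<Phi>]) auto
    have "(\<lambda>\<omega>. \<Psi> k (map (\<lambda>j. rnd (CS k) (e k) (f j \<omega>)) [0..<K])) \<in> borel_measurable M"
      apply (rule measurable_compose_countable'[where I=UNIV and f="\<lambda>l \<omega>. \<Psi> k l"])
        apply simp
       apply (rule measurable_map_list)
      using measurable_compose[OF f rnd_meas] apply (simp add: comp_def)
      by simp
    then show "(\<lambda>\<omega>. \<Phi> (c k \<omega>)) \<in> borel_measurable M" by (simp add: eq)
  next
    fix \<omega> assume \<omega>: "\<omega> \<in> space M"
    show "(\<lambda>k. \<Phi> (c k \<omega>)) \<longlonglongrightarrow> \<Phi> (\<lambda>j. f j \<omega>)"
    proof (rule \<Phi>)
      fix j k assume j: "j < K"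
      have r: "rnd (CS k) (e k) (f j \<omega>) < length (CS k) \<and> dist (f j \<omega>) (CS k ! rnd (CS k) (e k) (f j \<omega>)) < e k"
        using rnd_prop CS(2)[OF fG[OF j \<omega>]] by blast
      then show "c k \<omega> j \<in> G" using CS(1) j unfolding c_def by (auto intro: nth_mem)
    next
      fix j assume j: "j < K"
      show "f j \<omega> \<in> G" using fG[OF j \<omega>] .
      have r: "dist (c k \<omega> j) (f j \<omega>) \<le> e k" for k
      proof -
        have "dist (f j \<omega>) (CS k ! rnd (CS k) (e k) (f j \<omega>)) < e k"
          using rnd_prop CS(2)[OF fG[OF j \<omega>]] by blast
        then show ?thesis using j unfolding c_def by (simp add: dist_commute)
      qed
      show "(\<lambda>k. c k \<omega> j) \<longlonglongrightarrow> f j \<omega>"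
      proof -
        have l: "e \<longlonglongrightarrow> 0" unfolding e_def by (rule LIMSEQ_inverse_real_of_nat)
        have "(\<lambda>k. dist (c k \<omega> j) (f j \<omega>)) \<longlonglongrightarrow> 0"
          by (rule tendsto_sandwich[OF _ _ tendsto_const l]) (use r in auto)
        then show ?thesis by (subst tendsto_dist_iff)
      qed
    qed
  qed
qed




locale hkctx =
  fixes G :: "'a::{real_normed_algebra_1,banach} set" and \<mu> :: "'a measure"
    and E :: "nat \<Rightarrow> 'a" and n :: nat and p :: "real \<Rightarrow> 'a \<Rightarrow> real"
  assumes sg: "subgroup_of_units G" and cG: "compact G"
    and haar: "haar_prob G \<mu>" and hk: "heat_kernel G \<mu> E n p"
    and E: "\<And>i. i < n \<Longrightarrow> E i \<in> lie_alg G"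
begin

lemma one_G: "1 \<in> G" using sg unfolding subgroup_of_units_def by auto
lemma mult_G: "x \<in> G \<Longrightarrow> y \<in> G \<Longrightarrow> x * y \<in> G" using sg unfolding subgroup_of_units_def by auto

lemma ginv: assumes "x \<in> G" shows "ginv x \<in> G" "x * ginv x = 1" "ginv x * x = 1"
proof -
  obtain y where y: "y \<in> G" "x * y = 1" "y * x = 1" using sg assms unfolding subgroup_of_units_def by auto
  have "ginv x = y" unfolding ginv_def
  proof (rule the_equality)
    fix y' assume "x * y' = 1 \<and> y' * x = 1"
    then have "y' = y' * (x * y)" "y' * x = 1" using y by auto
    then show "y' = y" by (simp add: mult.assoc[symmetric])
  qed (use y in auto)
  then show "ginv x \<in> G" "x * ginv x = 1" "ginv x * x = 1" using y by auto
qed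

lemma ginv_eqI: assumes "x \<in> G" "x * y = 1" shows "ginv x = y"
proof -
  have "ginv x = ginv x * (x * y)" using assms by simp
  also have "\<dots> = y" using ginv(3)[OF assms(1)] by (simp add: mult.assoc[symmetric])
  finally show ?thesis .
qed

lemma ginv_mult: assumes "x \<in> G" "y \<in> G" shows "ginv (x * y) = ginv y * ginv x"
proof (rule ginv_eqI)
  show "x * y \<in> G" using assms mult_G by auto
  have "x * y * (ginv y * ginv x) = x * (y * ginv y) * ginv x" by (simp add: mult.assoc)
  then show "x * y * (ginv y * ginv x) = 1" using ginv assms by simp
qed

lemma exp_G: "X \<in> lie_alg G \<Longrightarrow> exp (t *\<^sub>R X) \<in> G" unfolding lie_alg_def by auto

lemma exp_add: "exp ((s + t) *\<^sub>R X) = exp (s *\<^sub>R X) * exp (t *\<^sub>R (X::'a))"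
proof -
  have "(s *\<^sub>R X) * (t *\<^sub>R X) = (t *\<^sub>R X) * (s *\<^sub>R X)" by (simp add: mult_scaleR_left mult_scaleR_right)
  then show ?thesis by (simp add: scaleR_add_left exp_add_commuting)
qed

lemma exp_comm: "exp (s *\<^sub>R X) * exp (t *\<^sub>R X) = exp (t *\<^sub>R X) * exp (s *\<^sub>R (X::'a))"
  by (metis exp_add add.commute)

lemma hk_pos: "t > 0 \<Longrightarrow> x \<in> G \<Longrightarrow> p t x > 0" using hk unfolding heat_kernel_def by auto

lemma central: assumes "t > 0" "a \<in> G" "b \<in> G" shows "p t (a * b) = p t (b * a)"
proof -
  have "p t (b * (a * b) * ginv b) = p t (a * b)"
    using hk assms mult_G unfolding heat_kernel_def by blast
  moreover have "b * (a * b) * ginv b = b * a" using ginv(2)[OF assms(3)] by (simp add: mult.assoc)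
  ultimately show ?thesis by simp
qed

lemma smooth: assumes "set ds \<subseteq> insert None (Some ` lie_alg G)"
  shows "continuous_on ({0<..} \<times> G) (\<lambda>(t, x). hderiv ds p t x)"
    "t > 0 \<Longrightarrow> x \<in> G \<Longrightarrow> X \<in> lie_alg G \<Longrightarrow> (\<lambda>s. hderiv ds p t (x * exp (s *\<^sub>R X))) differentiable (at 0)"
  using hk assms unfolding heat_kernel_def smooth_on_time_G_def by blast+

lemma hd1: "hderiv [Some X] p = (\<lambda>t x. lie_deriv X (p t) x)"
  by (simp add: lie_deriv_def fun_eq_iff)
lemma hd2: "hderiv [Some X, Some X] p = (\<lambda>t x. lie_deriv X (lie_deriv X (p t)) x)"
  by (simp add: lie_deriv_def fun_eq_iff)

lemma cont0: "continuous_on ({0<..} \<times> G) (\<lambda>(t, x). p t x)"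
  using smooth(1)[of "[]"] by simp
lemma cont1: assumes "X \<in> lie_alg G" shows "continuous_on ({0<..} \<times> G) (\<lambda>(t, x). lie_deriv X (p t) x)"
proof -
  have "set [Some X] \<subseteq> insert None (Some ` lie_alg G)" using assms by auto
  from smooth(1)[OF this, unfolded hd1] show ?thesis .
qed
lemma cont2: assumes "X \<in> lie_alg G" shows "continuous_on ({0<..} \<times> G) (\<lambda>(t, x). lie_deriv X (lie_deriv X (p t)) x)"
proof -
  have "set [Some X, Some X] \<subseteq> insert None (Some ` lie_alg G)" using assms by auto
  from smooth(1)[OF this, unfolded hd2] show ?thesis .
qed

lemma cont_fix: assumes "continuous_on ({0<..} \<times> G) (\<lambda>(t, x). F t x)" "t > 0"
  shows "continuous_on G (F t)"
proof -
  have "continuous_on G ((\<lambda>(t, x). F t x) \<circ> (\<lambda>x. (t, x)))"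
    apply (rule continuous_on_compose)
     apply (intro continuous_intros)
    apply (rule continuous_on_subset[OF assms(1)]) using assms by auto
  then show ?thesis by (simp add: comp_def)
qed

lemma diff0: "t > 0 \<Longrightarrow> x \<in> G \<Longrightarrow> X \<in> lie_alg G \<Longrightarrow> (\<lambda>s. p t (x * exp (s *\<^sub>R X))) differentiable (at 0)"
  using smooth(2)[of "[]"] by simp
lemma diff1: assumes "t > 0" "x \<in> G" "X \<in> lie_alg G"
  shows "(\<lambda>s. lie_deriv X (p t) (x * exp (s *\<^sub>R X))) differentiable (at 0)"
proof -
  have "set [Some X] \<subseteq> insert None (Some ` lie_alg G)" using assms by auto
  from smooth(2)[OF this, unfolded hd1, OF assms] show ?thesis .
qed

lemma space_mu: "space \<mu> = G" and sets_mu: "sets \<mu> = sets (restrict_space borel G)"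
  and prob_mu: "prob_space \<mu>"
  using haar unfolding haar_prob_def by auto

lemma inv_mu: "g \<in> G \<Longrightarrow> A \<in> sets \<mu> \<Longrightarrow> emeasure \<mu> ((\<lambda>x. g * x) ` A) = emeasure \<mu> A"
  using haar unfolding haar_prob_def by auto

lemma fin_mu: "finite_measure \<mu>" using prob_mu by (simp add: prob_space_def)

lemma cont_meas: "continuous_on G f \<Longrightarrow> f \<in> borel_measurable \<mu>"
  using measurable_cong_sets[OF sets_mu refl] borel_measurable_continuous_on_restrict by blast

lemma cont_bound: assumes "continuous_on G f" shows "\<exists>B. \<forall>x\<in>G. \<bar>f x :: real\<bar> \<le> B"
proof -
  have "bounded (f ` G)" using compact_imp_bounded[OF compact_continuous_image[OF assms cG]] .
  then show ?thesis by (force simp: bounded_iff)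
qed

lemma cont_int: assumes "continuous_on G f" shows "integrable \<mu> (f :: 'a \<Rightarrow> real)"
proof -
  obtain B where B: "\<forall>x\<in>G. \<bar>f x\<bar> \<le> B" using cont_bound[OF assms] by blast
  show ?thesis
    apply (rule finite_measure.integrable_const_bound[OF fin_mu, where B=B])
    using B space_mu apply (auto intro!: AE_I2)[1]
    by (rule cont_meas[OF assms])
qed

lemma meas_G: assumes "continuous_on G T" "T ` G \<subseteq> G" shows "T \<in> \<mu> \<rightarrow>\<^sub>M \<mu>"
proof -
  have "T \<in> restrict_space borel G \<rightarrow>\<^sub>M restrict_space borel G"
    apply (rule measurable_restrict_space2)
    using assms(2) apply (auto simp: space_restrict_space)[1]
    by (rule borel_measurable_continuous_on_restrict[OF assms(1)])
  then show ?thesis using measurable_cong_sets[OF sets_mu sets_mu] by blast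
qed

lemma left_inv: fixes f :: "'a \<Rightarrow> real" assumes g: "g \<in> G" and f: "f \<in> borel_measurable \<mu>"
  shows "(\<integral>y. f (g * y) \<partial>\<mu>) = (\<integral>y. f y \<partial>\<mu>)"
proof -
  have T: "(\<lambda>y. g * y) \<in> \<mu> \<rightarrow>\<^sub>M \<mu>"
    by (rule meas_G) (auto intro!: continuous_intros mult_G g)
  have "distr \<mu> \<mu> (\<lambda>y. g * y) = \<mu>"
  proof (rule measure_eqI)
    fix A assume A: "A \<in> sets (distr \<mu> \<mu> (\<lambda>y. g * y))"
    then have A': "A \<in> sets \<mu>" by simp
    then have AG: "A \<subseteq> G" using sets.sets_into_space space_mu by blast
    have "(\<lambda>y. g * y) -` A \<inter> space \<mu> = (\<lambda>y. ginv g * y) ` A"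
    proof (intro equalityI subsetI)
      fix y assume "y \<in> (\<lambda>y. g * y) -` A \<inter> space \<mu>"
      then have "g * y \<in> A" "y \<in> G" using space_mu by auto
      moreover have "ginv g * (g * y) = y" using ginv(3)[OF g] by (simp add: mult.assoc[symmetric])
      ultimately show "y \<in> (\<lambda>y. ginv g * y) ` A" by (metis image_eqI)
    next
      fix y assume "y \<in> (\<lambda>y. ginv g * y) ` A"
      then obtain a where a: "a \<in> A" "y = ginv g * a" by auto
      have "g * y = a" using a ginv(2)[OF g] by (simp add: mult.assoc[symmetric])
      moreover have "y \<in> G" using a AG ginv(1)[OF g] mult_G by auto
      ultimately show "y \<in> (\<lambda>y. g * y) -` A \<inter> space \<mu>" using a space_mu by auto
    qed
    then show "emeasure (distr \<mu> \<mu> (\<lambda>y. g * y)) A = emeasure \<mu> A"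
      using emeasure_distr[OF T A'] inv_mu[OF ginv(1)[OF g] A'] by simp
  qed simp
  then have "(\<integral>y. f y \<partial>\<mu>) = (\<integral>y. f y \<partial>(distr \<mu> \<mu> (\<lambda>y. g * y)))" by simp
  also have "\<dots> = (\<integral>y. f (g * y) \<partial>\<mu>)" by (rule integral_distr[OF T f])
  finally show ?thesis by simp
qed

end



context hkctx begin

lemma exp_cont: "continuous_on S (\<lambda>s::real. exp (s *\<^sub>R X))"
proof -
  have "continuous (at s) (\<lambda>s::real. exp (s *\<^sub>R X))" for s
    by (rule has_vector_derivative_continuous[OF exp_scaleR_has_vector_derivative_right])
  then show ?thesis by (simp add: continuous_at_imp_continuous_on)
qed

lemma phi_cont: "continuous_on S (\<lambda>x. exp (fst x *\<^sub>R X) * snd x)"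
proof -
  have "continuous_on S (\<lambda>x. exp (fst x *\<^sub>R X))"
    by (rule continuous_on_compose2[OF exp_cont[of UNIV X]]) (auto intro: continuous_intros)
  then show ?thesis by (intro continuous_intros)
qed

lemma RD0: assumes "t > 0" "z \<in> G" "X \<in> lie_alg G"
  shows "((\<lambda>\<sigma>. p t (exp (\<sigma> *\<^sub>R X) * z)) has_real_derivative lie_deriv X (p t) z) (at 0)"
proof -
  have eq: "(\<lambda>\<sigma>. p t (exp (\<sigma> *\<^sub>R X) * z)) = (\<lambda>\<sigma>. p t (z * exp (\<sigma> *\<^sub>R X)))"
    using central[OF assms(1) exp_G[OF assms(3)] assms(2)] by auto
  show ?thesis unfolding eq lie_deriv_def
    using DERIV_deriv_iff_real_differentiable[THEN iffD2, OF diff0[OF assms(1,2,3)]] .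
qed

lemma CENT1: assumes "t > 0" "y \<in> G" "X \<in> lie_alg G"
  shows "lie_deriv X (p t) (exp (\<sigma> *\<^sub>R X) * y) = lie_deriv X (p t) (y * exp (\<sigma> *\<^sub>R X))"
proof -
  have "p t (exp (\<sigma> *\<^sub>R X) * y * exp (\<tau> *\<^sub>R X)) = p t (y * exp (\<sigma> *\<^sub>R X) * exp (\<tau> *\<^sub>R X))" for \<tau>
  proof -
    have "p t (exp (\<sigma> *\<^sub>R X) * y * exp (\<tau> *\<^sub>R X)) = p t (exp (\<sigma> *\<^sub>R X) * (y * exp (\<tau> *\<^sub>R X)))"
      by (simp add: mult.assoc)
    also have "\<dots> = p t (y * exp (\<tau> *\<^sub>R X) * exp (\<sigma> *\<^sub>R X))"
      using central[OF assms(1) exp_G[OF assms(3)] mult_G[OF assms(2) exp_G[OF assms(3)]]] .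
    also have "\<dots> = p t (y * exp (\<sigma> *\<^sub>R X) * exp (\<tau> *\<^sub>R X))"
      by (simp add: mult.assoc exp_comm)
    finally show ?thesis .
  qed
  then show ?thesis unfolding lie_deriv_def by simp
qed

lemma RD1: assumes "t > 0" "z \<in> G" "X \<in> lie_alg G"
  shows "((\<lambda>\<sigma>. lie_deriv X (p t) (exp (\<sigma> *\<^sub>R X) * z)) has_real_derivative lie_deriv X (lie_deriv X (p t)) z) (at 0)"
proof -
  have eq: "(\<lambda>\<sigma>. lie_deriv X (p t) (exp (\<sigma> *\<^sub>R X) * z)) = (\<lambda>\<sigma>. lie_deriv X (p t) (z * exp (\<sigma> *\<^sub>R X)))"
    using CENT1[OF assms] by auto
  show ?thesis unfolding eq
    using DERIV_deriv_iff_real_differentiable[THEN iffD2, OF diff1[OF assms(1,2,3)]]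
    by (simp add: lie_deriv_def[of X "lie_deriv X (p t)"])
qed

lemma SHIFT: assumes d: "\<And>z. z \<in> G \<Longrightarrow> ((\<lambda>\<sigma>. f (exp (\<sigma> *\<^sub>R X) * z)) has_real_derivative f' z) (at 0)"
  and X: "X \<in> lie_alg G" and y: "y \<in> G"
  shows "((\<lambda>\<sigma>. f (exp (\<sigma> *\<^sub>R X) * y)) has_real_derivative f' (exp (s *\<^sub>R X) * y)) (at s)"
proof -
  have "((\<lambda>\<sigma>. f (exp (\<sigma> *\<^sub>R X) * (exp (s *\<^sub>R X) * y))) has_real_derivative f' (exp (s *\<^sub>R X) * y)) (at 0)"
    using d mult_G exp_G[OF X] y by blast
  moreover have "(\<lambda>\<sigma>. f (exp (\<sigma> *\<^sub>R X) * (exp (s *\<^sub>R X) * y))) = (\<lambda>\<sigma>. f (exp ((\<sigma> + s) *\<^sub>R X) * y))"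
    by (simp add: exp_add mult.assoc)
  ultimately have "((\<lambda>\<sigma>. f (exp ((\<sigma> + s) *\<^sub>R X) * y)) has_real_derivative f' (exp (s *\<^sub>R X) * y)) (at 0)"
    by simp
  then show ?thesis using DERIV_shift[of "\<lambda>\<sigma>. f (exp (\<sigma> *\<^sub>R X) * y)" _ 0 s] by simp
qed

lemma ibp:
  fixes f f' g g' :: "'a \<Rightarrow> real"
  assumes X: "X \<in> lie_alg G"
    and cf: "continuous_on G f" and cf': "continuous_on G f'"
    and cg: "continuous_on G g" and cg': "continuous_on G g'"
    and df: "\<And>z. z \<in> G \<Longrightarrow> ((\<lambda>\<sigma>. f (exp (\<sigma> *\<^sub>R X) * z)) has_real_derivative f' z) (at 0)"
    and dg: "\<And>z. z \<in> G \<Longrightarrow> ((\<lambda>\<sigma>. g (exp (\<sigma> *\<^sub>R X) * z)) has_real_derivative g' z) (at 0)"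
  shows "(\<integral>y. f' y * g y + f y * g' y \<partial>\<mu>) = 0"
proof -
  define e where "e s = exp (s *\<^sub>R X)" for s
  have eG: "e s * y \<in> G" if "y \<in> G" for s y using mult_G exp_G[OF X] that unfolding e_def by blast
  define F where "F s y = f (e s * y) * g (e s * y)" for s y
  define D where "D s y = f' (e s * y) * g (e s * y) + g' (e s * y) * f (e s * y)" for s y
  have comp: "continuous_on S (\<lambda>x. h (e (fst x) * snd x))" if "continuous_on G h" "S \<subseteq> UNIV \<times> G" for h S
    unfolding e_def apply (rule continuous_on_compose2[OF that(1) phi_cont[of S X]])
    using that(2) eG unfolding e_def by auto
  have compG: "continuous_on G (\<lambda>y. h (e s * y))" if "continuous_on G h" for h s
    apply (rule continuous_on_compose2[OF that, of G "\<lambda>y. e s * y"])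
    using eG by (auto intro!: continuous_intros)
  have Kc: "(\<integral>y. F s y \<partial>\<mu>) = (\<integral>y. f y * g y \<partial>\<mu>)" for s
    unfolding F_def
    using left_inv[of "e s" "\<lambda>y. f y * g y"] exp_G[OF X] cont_meas[of "\<lambda>y. f y * g y"] cf cg
    unfolding e_def by (auto intro: continuous_intros)
  have "((\<lambda>s. \<integral>y. F s y \<partial>\<mu>) has_real_derivative (\<integral>y. D 0 y \<partial>\<mu>)) (at 0)"
  proof (rule deriv_integral[OF fin_mu, of "-1" 0 1])
    show "compact (space \<mu>)" using cG space_mu by simp
    show "continuous_on ({-1..1} \<times> space \<mu>) (\<lambda>(s, y). D s y)"
      unfolding D_def space_mu case_prod_beta
      by (intro continuous_intros comp cf cf' cg cg') auto
    fix s y assume "y \<in> space \<mu>"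
    then have y: "y \<in> G" using space_mu by simp
    show "((\<lambda>s. F s y) has_real_derivative D s y) (at s)"
      unfolding F_def D_def e_def
      by (rule DERIV_mult[OF SHIFT[OF df X y] SHIFT[OF dg X y]])
  next
    fix s :: real
    show "integrable \<mu> (F s)" unfolding F_def by (intro cont_int continuous_intros compG cf cg)
  next
    show "integrable \<mu> (D 0)" unfolding D_def by (intro cont_int continuous_intros compG cf cg cf' cg')
  qed simp_all
  moreover have "((\<lambda>s. \<integral>y. F s y \<partial>\<mu>) has_real_derivative 0) (at 0)"
    unfolding Kc by simp
  ultimately have "(\<integral>y. D 0 y \<partial>\<mu>) = 0" by (rule DERIV_unique)
  then show ?thesis unfolding D_def e_def by (simp add: mult.commute)
qed

end



context hkctx begin

lemma contc: assumes "continuous_on ({0<..} \<times> G) (\<lambda>(t,x). F t x)" "continuous_on S a" "continuous_on S b"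
    "\<And>x. x \<in> S \<Longrightarrow> a x > 0 \<and> b x \<in> G"
  shows "continuous_on S (\<lambda>x. F (a x) (b x))"
  using continuous_on_compose2[OF assms(1), of S "\<lambda>x. (a x, b x)"] assms(2-4)
  by (auto intro: continuous_intros)

lemma contG: assumes "continuous_on ({0<..} \<times> G) (\<lambda>(t,x). F t x)" "t > 0" "continuous_on G b"
    "\<And>x. x \<in> G \<Longrightarrow> b x \<in> G"
  shows "continuous_on G (\<lambda>x. F t (b x))"
  by (rule contc[OF assms(1)]) (use assms in \<open>auto intro: continuous_intros\<close>)

lemma star: assumes X: "X \<in> lie_alg G" and s: "s > 0" and r: "r > 0" and w: "w \<in> G"
  shows "(\<integral>v. lie_deriv X (lie_deriv X (p s)) v * p r (v * w) \<partial>\<mu>)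
       = (\<integral>v. p s v * lie_deriv X (lie_deriv X (p r)) (v * w) \<partial>\<mu>)"
proof -
  have vw: "\<And>v. v \<in> G \<Longrightarrow> v * w \<in> G" using mult_G w by blast
  have cw: "continuous_on G (\<lambda>v. v * w)" by (intro continuous_intros)
  have ca0: "continuous_on G (\<lambda>v. p s v)" using contG[OF cont0 s, of "\<lambda>v. v"] by (auto intro: continuous_intros)
  have ca1: "continuous_on G (\<lambda>v. lie_deriv X (p s) v)" using contG[OF cont1[OF X] s, of "\<lambda>v. v"] by (auto intro: continuous_intros)
  have ca2: "continuous_on G (\<lambda>v. lie_deriv X (lie_deriv X (p s)) v)" using contG[OF cont2[OF X] s, of "\<lambda>v. v"] by (auto intro: continuous_intros)
  have cb0: "continuous_on G (\<lambda>v. p r (v * w))" using contG[OF cont0 r cw vw] .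
  have cb1: "continuous_on G (\<lambda>v. lie_deriv X (p r) (v * w))" using contG[OF cont1[OF X] r cw vw] .
  have cb2: "continuous_on G (\<lambda>v. lie_deriv X (lie_deriv X (p r)) (v * w))" using contG[OF cont2[OF X] r cw vw] .
  have db0: "((\<lambda>\<sigma>. p r (exp (\<sigma> *\<^sub>R X) * z * w)) has_real_derivative lie_deriv X (p r) (z * w)) (at 0)" if "z \<in> G" for z
    using RD0[OF r vw[OF that] X] by (simp add: mult.assoc)
  have db1: "((\<lambda>\<sigma>. lie_deriv X (p r) (exp (\<sigma> *\<^sub>R X) * z * w)) has_real_derivative lie_deriv X (lie_deriv X (p r)) (z * w)) (at 0)" if "z \<in> G" for z
    using RD1[OF r vw[OF that] X] by (simp add: mult.assoc)
  have I1: "(\<integral>v. lie_deriv X (lie_deriv X (p s)) v * p r (v * w) + lie_deriv X (p s) v * lie_deriv X (p r) (v * w) \<partial>\<mu>) = 0"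
    by (rule ibp[OF X ca1 ca2 cb0 cb1 RD1[OF s _ X] db0])
  have I2: "(\<integral>v. lie_deriv X (p s) v * lie_deriv X (p r) (v * w) + p s v * lie_deriv X (lie_deriv X (p r)) (v * w) \<partial>\<mu>) = 0"
    by (rule ibp[OF X ca0 ca1 cb1 cb2 RD0[OF s _ X] db1])
  have i1: "integrable \<mu> (\<lambda>v. lie_deriv X (lie_deriv X (p s)) v * p r (v * w))"
    by (intro cont_int continuous_intros ca2 cb0)
  have i2: "integrable \<mu> (\<lambda>v. lie_deriv X (p s) v * lie_deriv X (p r) (v * w))"
    by (intro cont_int continuous_intros ca1 cb1)
  have i3: "integrable \<mu> (\<lambda>v. p s v * lie_deriv X (lie_deriv X (p r)) (v * w))"
    by (intro cont_int continuous_intros ca0 cb2)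
  show ?thesis using I1 I2 Bochner_Integration.integral_add[OF i1 i2] Bochner_Integration.integral_add[OF i2 i3]
    by simp
qed

definition Lap where "Lap t x = laplacian E n (p t) x"

lemma contL: "continuous_on ({0<..} \<times> G) (\<lambda>(t,x). Lap t x)"
proof -
  have "continuous_on ({0<..} \<times> G) (\<lambda>y. \<Sum>i<n. lie_deriv (E i) (lie_deriv (E i) (p (fst y))) (snd y))"
    apply (rule continuous_on_sum)
    using cont2[OF E] unfolding case_prod_beta by blast
  then show ?thesis unfolding Lap_def laplacian_def case_prod_beta .
qed

lemma heat: "t > 0 \<Longrightarrow> x \<in> G \<Longrightarrow> ((\<lambda>s. p s x) has_real_derivative (1/2) * Lap t x) (at t)"
  using hk unfolding heat_kernel_def Lap_def by blast

lemma delta: "continuous_on G f \<Longrightarrow> ((\<lambda>t. \<integral>x. p t x * f x \<partial>\<mu>) \<longlongrightarrow> f 1) (at_right 0)"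
  using hk unfolding heat_kernel_def by blast

lemma Lap_sym: assumes s: "s > 0" and r: "r > 0" and w: "w \<in> G"
  shows "(\<integral>v. Lap s v * p r (v * w) \<partial>\<mu>) = (\<integral>v. Lap r (v * w) * p s v \<partial>\<mu>)"
proof -
  have vw: "\<And>v. v \<in> G \<Longrightarrow> v * w \<in> G" using mult_G w by blast
  have cw: "continuous_on G (\<lambda>v. v * w)" by (intro continuous_intros)
  have "(\<integral>v. Lap s v * p r (v * w) \<partial>\<mu>) = (\<integral>v. (\<Sum>i<n. lie_deriv (E i) (lie_deriv (E i) (p s)) v * p r (v * w)) \<partial>\<mu>)"
    unfolding Lap_def laplacian_def by (simp add: sum_distrib_right)
  also have "\<dots> = (\<Sum>i<n. \<integral>v. lie_deriv (E i) (lie_deriv (E i) (p s)) v * p r (v * w) \<partial>\<mu>)"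
    apply (rule Bochner_Integration.integral_sum)
    apply (intro cont_int continuous_intros contG[OF cont0 r cw vw])
    using contG[OF cont2[OF E] s, of _ "\<lambda>v. v"] by (auto intro: continuous_intros)
  also have "\<dots> = (\<Sum>i<n. \<integral>v. p s v * lie_deriv (E i) (lie_deriv (E i) (p r)) (v * w) \<partial>\<mu>)"
    using star[OF E s r w] by simp
  also have "\<dots> = (\<integral>v. (\<Sum>i<n. p s v * lie_deriv (E i) (lie_deriv (E i) (p r)) (v * w)) \<partial>\<mu>)"
    apply (rule Bochner_Integration.integral_sum[symmetric])
    apply (intro cont_int continuous_intros contG[OF cont2[OF E] r cw vw])
    using contG[OF cont0 s, of "\<lambda>v. v"] by (auto intro: continuous_intros)
  also have "\<dots> = (\<integral>v. Lap r (v * w) * p s v \<partial>\<mu>)"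
    unfolding Lap_def laplacian_def by (simp add: sum_distrib_left mult.commute)
  finally show ?thesis .
qed

end



context hkctx begin

lemma U_deriv: assumes w: "w \<in> G" and s: "0 < s" "s < R"
  shows "((\<lambda>s. \<integral>v. p s v * p (R - s) (v * w) \<partial>\<mu>) has_real_derivative 0) (at s)"
proof -
  define a where "a = s / 2"
  define b where "b = (s + R) / 2"
  have ab: "0 < a" "a < s" "s < b" "b < R" using s by (auto simp: a_def b_def)
  have vw: "\<And>v. v \<in> G \<Longrightarrow> v * w \<in> G" using mult_G w by blast
  have cw: "continuous_on G (\<lambda>v. v * w)" by (intro continuous_intros)
  define D where "D \<sigma> v = (1/2 * Lap \<sigma> v) * p (R - \<sigma>) (v * w) + ((1/2 * Lap (R - \<sigma>) (v * w)) * -1) * p \<sigma> v" for \<sigma> v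
  have "((\<lambda>s. \<integral>v. p s v * p (R - s) (v * w) \<partial>\<mu>) has_real_derivative (\<integral>v. D s v \<partial>\<mu>)) (at s)"
  proof (rule deriv_integral[OF fin_mu, of a s b])
    show "compact (space \<mu>)" using cG space_mu by simp
    show "a < s" "s < b" using ab by auto
    fix \<sigma> v assume \<sigma>: "\<sigma> \<in> {a..b}" and "v \<in> space \<mu>"
    then have v: "v \<in> G" using space_mu by simp
    have h1: "((\<lambda>\<sigma>. p \<sigma> v) has_real_derivative 1/2 * Lap \<sigma> v) (at \<sigma>)"
      using heat[OF _ v] \<sigma> ab by auto
    have dR: "((\<lambda>\<sigma>. R - \<sigma>) has_real_derivative -1) (at \<sigma>)" by (auto intro!: derivative_eq_intros)
    have h2: "((\<lambda>\<sigma>. p (R - \<sigma>) (v * w)) has_real_derivative (1/2 * Lap (R - \<sigma>) (v * w)) * -1) (at \<sigma>)"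
    proof -
      have "R - \<sigma> > 0" using \<sigma> ab by auto
      from DERIV_chain2[OF heat[OF this vw[OF v]] dR] show ?thesis .
    qed
    show "((\<lambda>\<sigma>. p \<sigma> v * p (R - \<sigma>) (v * w)) has_real_derivative D \<sigma> v) (at \<sigma>)"
      unfolding D_def by (rule DERIV_mult[OF h1 h2])
  next
    have sub: "\<And>x. x \<in> {a..b} \<times> space \<mu> \<Longrightarrow> fst x > 0 \<and> snd x \<in> G"
      "\<And>x. x \<in> {a..b} \<times> space \<mu> \<Longrightarrow> R - fst x > 0 \<and> snd x * w \<in> G"
      using ab space_mu vw by auto
    show "continuous_on ({a..b} \<times> space \<mu>) (\<lambda>(s, y). D s y)"
      unfolding D_def case_prod_beta
      by (intro continuous_intros contc[OF contL] contc[OF cont0] sub) auto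
  next
    fix \<sigma> :: real assume "\<sigma> \<in> {a..b}"
    then have "\<sigma> > 0" "R - \<sigma> > 0" using ab by auto
    then show "integrable \<mu> (\<lambda>v. p \<sigma> v * p (R - \<sigma>) (v * w))"
      by (intro cont_int continuous_intros contG[OF cont0 _ cw vw] contG[OF cont0, of _ "\<lambda>v. v"]) auto
  next
    have "s > 0" "R - s > 0" using s by auto
    then show "integrable \<mu> (D s)"
      unfolding D_def
      by (intro cont_int continuous_intros contG[OF cont0 _ cw vw] contG[OF contL _ cw vw]
          contG[OF cont0, of _ "\<lambda>v. v"] contG[OF contL, of _ "\<lambda>v. v"]) auto
  qed
  moreover have "(\<integral>v. D s v \<partial>\<mu>) = 0"
  proof -
    have r: "R - s > 0" using s by auto
    have i1: "integrable \<mu> (\<lambda>v. Lap s v * p (R - s) (v * w))"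
      using s by (intro cont_int continuous_intros contG[OF cont0 r cw vw] contG[OF contL, of _ "\<lambda>v. v"]) auto
    have i2: "integrable \<mu> (\<lambda>v. Lap (R - s) (v * w) * p s v)"
      using s by (intro cont_int continuous_intros contG[OF contL r cw vw] contG[OF cont0, of _ "\<lambda>v. v"]) auto
    have "(\<integral>v. D s v \<partial>\<mu>) = (\<integral>v. 1/2 * (Lap s v * p (R - s) (v * w)) - 1/2 * (Lap (R - s) (v * w) * p s v) \<partial>\<mu>)"
      unfolding D_def by (rule Bochner_Integration.integral_cong) (auto simp: algebra_simps)
    also have "\<dots> = 1/2 * (\<integral>v. Lap s v * p (R - s) (v * w) \<partial>\<mu>) - 1/2 * (\<integral>v. Lap (R - s) (v * w) * p s v \<partial>\<mu>)"
      using i1 i2 by simp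
    also have "\<dots> = 0" using Lap_sym[OF s(1) r w] by simp
    finally show ?thesis .
  qed
  ultimately show ?thesis by simp
qed

end



context hkctx begin

lemma q_lim: assumes w: "w \<in> G" and R: "R > 0"
  shows "((\<lambda>s. \<integral>v. p s v * (p (R - s) (v * w) - p R (v * w)) \<partial>\<mu>) \<longlongrightarrow> 0) (at_right 0)"
proof (rule tendstoI)
  fix e :: real assume e: "e > 0"
  have vw: "\<And>v. v \<in> G \<Longrightarrow> v * w \<in> G" using mult_G w by blast
  have cw: "continuous_on G (\<lambda>v. v * w)" by (intro continuous_intros)
  have ones: "((\<lambda>t. \<integral>v. p t v * 1 \<partial>\<mu>) \<longlongrightarrow> 1) (at_right 0)"
    using delta[of "\<lambda>_. 1"] by simp
  have "\<forall>\<^sub>F t in at_right 0. dist (\<integral>v. p t v * 1 \<partial>\<mu>) 1 < 1"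
    using tendstoD[OF ones, of 1] by simp
  then obtain b1 where b1: "b1 > 0" "\<And>t. 0 < t \<Longrightarrow> t < b1 \<Longrightarrow> (\<integral>v. p t v \<partial>\<mu>) < 2"
    unfolding eventually_at_right_field by (auto simp: dist_real_def abs_less_iff)
  have uc: "uniformly_continuous_on ({R/2..R} \<times> G) (\<lambda>(t,x). p t x)"
    apply (rule compact_uniformly_continuous[OF continuous_on_subset[OF cont0]])
    using R apply auto[1]
    by (intro compact_Times compact_Icc cG)
  define \<epsilon> where "\<epsilon> = e / 3"
  have \<epsilon>: "\<epsilon> > 0" using e by (simp add: \<epsilon>_def)
  obtain d where d: "d > 0" and dd: "\<And>x x'. x \<in> {R/2..R} \<times> G \<Longrightarrow> x' \<in> {R/2..R} \<times> G \<Longrightarrow>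
        dist x' x < d \<Longrightarrow> dist ((\<lambda>(t,x). p t x) x') ((\<lambda>(t,x). p t x) x) < \<epsilon>"
    using uc \<epsilon> unfolding uniformly_continuous_on_def by metis
  show "\<forall>\<^sub>F s in at_right 0. dist (\<integral>v. p s v * (p (R - s) (v * w) - p R (v * w)) \<partial>\<mu>) 0 < e"
    unfolding eventually_at_right_field
  proof (intro exI[of _ "min (min d (R/2)) b1"] conjI allI impI)
    show "0 < min (min d (R/2)) b1" using d R b1 by simp
    fix s :: real assume s: "0 < s" "s < min (min d (R/2)) b1"
    have pt: "\<bar>p (R - s) (v * w) - p R (v * w)\<bar> < \<epsilon>" if v: "v \<in> G" for v
    proof -
      have "dist (R - s, v * w) (R, v * w) < d" using s by (simp add: dist_Pair_Pair dist_real_def)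
      then have "dist (p (R - s) (v * w)) (p R (v * w)) < \<epsilon>"
        using dd[of "(R, v * w)" "(R - s, v * w)"] s R vw[OF v] by auto
      then show ?thesis by (simp add: dist_real_def)
    qed
    have ip: "integrable \<mu> (p s)" using contG[OF cont0 s(1), of "\<lambda>v. v"] by (auto intro: cont_int continuous_intros)
    have rs: "R - s > 0" using s by auto
    have ih: "integrable \<mu> (\<lambda>v. p s v * (p (R - s) (v * w) - p R (v * w)))"
      using s R by (intro cont_int continuous_intros contG[OF cont0 _ cw vw] contG[OF cont0, of _ "\<lambda>v. v"]) auto
    have "\<bar>\<integral>v. p s v * (p (R - s) (v * w) - p R (v * w)) \<partial>\<mu>\<bar> \<le> (\<integral>v. \<bar>p s v * (p (R - s) (v * w) - p R (v * w))\<bar> \<partial>\<mu>)"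
      by (rule integral_abs_bound)
    also have "\<dots> \<le> (\<integral>v. p s v * \<epsilon> \<partial>\<mu>)"
    proof (rule integral_mono)
      show "integrable \<mu> (\<lambda>v. \<bar>p s v * (p (R - s) (v * w) - p R (v * w))\<bar>)" using ih by auto
      show "integrable \<mu> (\<lambda>v. p s v * \<epsilon>)" using ip by auto
      fix v assume "v \<in> space \<mu>"
      then have v: "v \<in> G" using space_mu by simp
      have "\<bar>p s v * (p (R - s) (v * w) - p R (v * w))\<bar> = p s v * \<bar>p (R - s) (v * w) - p R (v * w)\<bar>"
        using hk_pos[OF s(1) v] by (simp add: abs_mult)
      also have "\<dots> \<le> p s v * \<epsilon>" using pt[OF v] hk_pos[OF s(1) v] by (simp add: less_imp_le)
      finally show "\<bar>p s v * (p (R - s) (v * w) - p R (v * w))\<bar> \<le> p s v * \<epsilon>" .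
    qed
    also have "\<dots> = (\<integral>v. p s v \<partial>\<mu>) * \<epsilon>" by simp
    also have "\<dots> < 2 * \<epsilon>" using b1(2)[of s] s \<epsilon> by (simp add: mult_strict_right_mono)
    also have "\<dots> < e" using e by (simp add: \<epsilon>_def)
    finally show "dist (\<integral>v. p s v * (p (R - s) (v * w) - p R (v * w)) \<partial>\<mu>) 0 < e" by (simp add: dist_real_def)
  qed
qed

lemma U_lim: assumes w: "w \<in> G" and R: "R > 0"
  shows "((\<lambda>s. \<integral>v. p s v * p (R - s) (v * w) \<partial>\<mu>) \<longlongrightarrow> p R w) (at_right 0)"
proof -
  have vw: "\<And>v. v \<in> G \<Longrightarrow> v * w \<in> G" using mult_G w by blast
  have cw: "continuous_on G (\<lambda>v. v * w)" by (intro continuous_intros)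
  have l1: "((\<lambda>t. \<integral>v. p t v * p R (v * w) \<partial>\<mu>) \<longlongrightarrow> p R w) (at_right 0)"
    using delta[OF contG[OF cont0 R cw vw]] by simp
  have "((\<lambda>s. (\<integral>v. p s v * p R (v * w) \<partial>\<mu>) + (\<integral>v. p s v * (p (R - s) (v * w) - p R (v * w)) \<partial>\<mu>)) \<longlongrightarrow> p R w + 0) (at_right 0)"
    by (rule tendsto_add[OF l1 q_lim[OF w R]])
  moreover have "\<forall>\<^sub>F s in at_right 0. (\<integral>v. p s v * p R (v * w) \<partial>\<mu>) + (\<integral>v. p s v * (p (R - s) (v * w) - p R (v * w)) \<partial>\<mu>)
      = (\<integral>v. p s v * p (R - s) (v * w) \<partial>\<mu>)"
    unfolding eventually_at_right_field
  proof (intro exI[of _ R] conjI allI impI)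
    fix s :: real assume s: "0 < s" "s < R"
    have rs: "R - s > 0" using s by auto
    have i1: "integrable \<mu> (\<lambda>v. p s v * p R (v * w))"
      using s R by (intro cont_int continuous_intros contG[OF cont0 _ cw vw] contG[OF cont0, of _ "\<lambda>v. v"]) auto
    have i2: "integrable \<mu> (\<lambda>v. p s v * (p (R - s) (v * w) - p R (v * w)))"
      using s R by (intro cont_int continuous_intros contG[OF cont0 _ cw vw] contG[OF cont0, of _ "\<lambda>v. v"]) auto
    show "(\<integral>v. p s v * p R (v * w) \<partial>\<mu>) + (\<integral>v. p s v * (p (R - s) (v * w) - p R (v * w)) \<partial>\<mu>)
      = (\<integral>v. p s v * p (R - s) (v * w) \<partial>\<mu>)"
      using Bochner_Integration.integral_add[OF i1 i2, symmetric] by (simp add: algebra_simps)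
  qed (use R in simp)
  ultimately show ?thesis by (simp add: tendsto_cong)
qed

lemma semigroup: assumes w: "w \<in> G" and s: "0 < s" "s < R"
  shows "(\<integral>v. p s v * p (R - s) (v * w) \<partial>\<mu>) = p R w"
proof -
  define U where "U s = (\<integral>v. p s v * p (R - s) (v * w) \<partial>\<mu>)" for s
  have "\<exists>c. \<forall>x\<in>{0<..<R}. U x = c"
  proof (rule has_derivative_zero_constant)
    fix x assume x: "x \<in> {0<..<R}"
    have "(U has_real_derivative 0) (at x)" unfolding U_def using U_deriv[OF w] x by auto
    moreover have "(*) (0::real) = (\<lambda>h. 0)" by auto
    ultimately have "(U has_derivative (\<lambda>h. 0)) (at x)" by (simp add: has_field_derivative_def)
    then show "(U has_derivative (\<lambda>h. 0)) (at x within {0<..<R})" by (rule has_derivative_at_withinI)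
  qed simp
  then obtain c where c: "\<And>x. x \<in> {0<..<R} \<Longrightarrow> U x = c" by blast
  have R: "R > 0" using s by simp
  have "(U \<longlongrightarrow> p R w) (at_right 0)" unfolding U_def using U_lim[OF w R] .
  moreover have "(U \<longlongrightarrow> c) (at_right 0)"
  proof (rule tendsto_eventually)
    show "\<forall>\<^sub>F x in at_right 0. U x = c"
      unfolding eventually_at_right_field using R c by (auto intro!: exI[of _ R])
  qed
  ultimately have "c = p R w" using tendsto_unique[OF trivial_limit_at_right_real] by blast
  then show ?thesis using c[of s] s unfolding U_def by simp
qed

end



context hkctx begin

definition Gs :: "(nat \<Rightarrow> 'a) \<Rightarrow> 'a \<Rightarrow> bool" where
  "Gs c v \<longleftrightarrow> (\<forall>k. c k \<in> G) \<and> v \<in> G \<and> c \<longlonglongrightarrow> v"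

lemma Gs_const: "v \<in> G \<Longrightarrow> Gs (\<lambda>k. v) v" by (simp add: Gs_def)

lemma Gs_mult: "Gs a u \<Longrightarrow> Gs b v \<Longrightarrow> Gs (\<lambda>k. a k * b k) (u * v)"
  unfolding Gs_def by (auto intro: mult_G tendsto_mult)

lemma Gs_ginv: assumes "Gs c v" shows "Gs (\<lambda>k. ginv (c k)) (ginv v)"
proof -
  have c: "\<And>k. c k \<in> G" "v \<in> G" "c \<longlonglongrightarrow> v" using assms unfolding Gs_def by auto
  obtain B where B: "\<And>x. x \<in> G \<Longrightarrow> norm x \<le> B" using compact_imp_bounded[OF cG] unfolding bounded_iff by blast
  have eq: "ginv (c k) - ginv v = ginv (c k) * (v - c k) * ginv v" for k
  proof -
    have "ginv (c k) * (v - c k) * ginv v = ginv (c k) * (v * ginv v) - (ginv (c k) * c k) * ginv v"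
      by (simp add: algebra_simps mult.assoc)
    also have "\<dots> = ginv (c k) - ginv v" using ginv(2)[OF c(2)] ginv(3)[OF c(1)] by simp
    finally show ?thesis by simp
  qed
  have bd: "norm (ginv (c k) - ginv v) \<le> B * B * norm (v - c k)" for k
  proof -
    have "norm (ginv (c k) - ginv v) \<le> norm (ginv (c k)) * norm (v - c k) * norm (ginv v)"
    proof -
      have "norm (ginv (c k) * (v - c k) * ginv v) \<le> norm (ginv (c k) * (v - c k)) * norm (ginv v)"
        by (rule norm_mult_ineq)
      also have "\<dots> \<le> norm (ginv (c k)) * norm (v - c k) * norm (ginv v)"
        by (rule mult_right_mono[OF norm_mult_ineq norm_ge_zero])
      finally show ?thesis unfolding eq .
    qed
    also have "\<dots> \<le> B * norm (v - c k) * B"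
    proof -
      have b1: "norm (ginv (c k)) \<le> B" "norm (ginv v) \<le> B" using B ginv(1) c by auto
      have "B \<ge> 0" using order_trans[OF norm_ge_zero b1(1)] .
      then show ?thesis using b1 by (intro mult_mono) auto
    qed
    finally show ?thesis by (simp add: algebra_simps)
  qed
  have "(\<lambda>k. v - c k) \<longlonglongrightarrow> 0" using tendsto_diff[OF tendsto_const c(3), of v] by simp
  then have "(\<lambda>k. B * B * norm (v - c k)) \<longlonglongrightarrow> 0" using tendsto_mult_right_zero tendsto_norm_zero by blast
  then have "(\<lambda>k. ginv (c k) - ginv v) \<longlonglongrightarrow> 0"
    by (rule Lim_null_comparison[rotated]) (use bd in auto)
  then have "(\<lambda>k. ginv (c k)) \<longlonglongrightarrow> ginv v" by (rule LIM_zero_cancel)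
  then show ?thesis unfolding Gs_def using ginv(1) c by auto
qed

lemma Gs_prod_list: "(\<And>i. i \<in> set is \<Longrightarrow> Gs (\<lambda>k. F i k) (L i)) \<Longrightarrow> Gs (\<lambda>k. prod_list (map (\<lambda>i. F i k) is)) (prod_list (map L is))"
  by (induction "is") (auto intro: Gs_mult Gs_const one_G)

lemma Gs_p: "t > 0 \<Longrightarrow> Gs c v \<Longrightarrow> (\<lambda>k. p t (c k)) \<longlonglongrightarrow> p t v"
  unfolding Gs_def by (intro continuous_on_tendsto_compose[OF cont_fix[OF cont0]]) auto

lemma prod_list_G: "(\<And>a. a \<in> set l \<Longrightarrow> a \<in> G) \<Longrightarrow> prod_list l \<in> G"
  by (induction l) (auto intro: mult_G one_G)

lemma gcomm_G: "a \<in> G \<Longrightarrow> b \<in> G \<Longrightarrow> gcomm a b \<in> G"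
  unfolding gcomm_def by (intro mult_G ginv(1))

lemma Gs_gcomm: "Gs a u \<Longrightarrow> Gs b v \<Longrightarrow> Gs (\<lambda>k. gcomm (a k) (b k)) (gcomm u v)"
  unfolding gcomm_def by (intro Gs_mult Gs_ginv)

lemma K: assumes x: "x \<in> G" and u: "u \<in> G" and T: "T > 0" and T': "T' > 0"
  shows "(\<integral>z. p T (ginv x * z) * p T' (z * u) \<partial>\<mu>) = p (T + T') (u * x)"
proof -
  have f: "continuous_on G (\<lambda>z. p T (ginv x * z) * p T' (z * u))"
    by (intro continuous_intros contG[OF cont0 T] contG[OF cont0 T']) (auto intro: mult_G ginv x u)
  have "(\<integral>z. p T (ginv x * z) * p T' (z * u) \<partial>\<mu>) = (\<integral>v. p T (ginv x * (x * v)) * p T' (x * v * u) \<partial>\<mu>)"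
    using left_inv[OF x cont_meas[OF f]] by simp
  also have "\<dots> = (\<integral>v. p T v * p ((T + T') - T) (v * (u * x)) \<partial>\<mu>)"
  proof (rule Bochner_Integration.integral_cong[OF refl])
    fix v assume "v \<in> space \<mu>"
    then have v: "v \<in> G" using space_mu by simp
    have "ginv x * (x * v) = v" using ginv(3)[OF x] by (simp add: mult.assoc[symmetric])
    moreover have "p T' (x * v * u) = p T' (v * (u * x))"
      using central[OF T' x mult_G[OF v u]] by (simp add: mult.assoc)
    ultimately show "p T (ginv x * (x * v)) * p T' (x * v * u) = p T v * p ((T + T') - T) (v * (u * x))" by simp
  qed
  also have "\<dots> = p (T + T') (u * x)" by (rule semigroup[OF mult_G[OF u x]]) (use T T' in auto)
  finally show ?thesis .
qed

end



definition PrF :: "'a::ring_1 list \<Rightarrow> nat \<Rightarrow> (nat \<Rightarrow> 'a) \<Rightarrow> 'a \<Rightarrow> 'a" where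
  "PrF xs g w z = prod_list (map (\<lambda>j. ginv (w (2*g+j)) * (xs @ [z]) ! j * w (2*g+j)) [0..<Suc (length xs)]
      @ map (\<lambda>i. gcomm (w (2*i)) (w (2*i+1))) [0..<g])"

lemma Zfun_eq: "Zfun \<mu> p g t (xs @ [z]) = (\<integral>w. p t (PrF xs g w z) \<partial>(Pi\<^sub>M {..<2*g + Suc (length xs)} (\<lambda>_. \<mu>)))"
  unfolding Zfun_def PrF_def by simp

lemma PrF_cong: assumes "\<And>j. j < 2*g + Suc (length xs) \<Longrightarrow> w j = w' j"
  shows "PrF xs g w z = PrF xs g w' z"
proof -
  have "map (\<lambda>j. ginv (w (2*g+j)) * (xs @ [z]) ! j * w (2*g+j)) [0..<Suc (length xs)]
      = map (\<lambda>j. ginv (w' (2*g+j)) * (xs @ [z]) ! j * w' (2*g+j)) [0..<Suc (length xs)]"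
  proof (rule map_cong[OF refl])
    fix j assume "j \<in> set [0..<Suc (length xs)]"
    then have "2*g+j < 2*g + Suc (length xs)" by auto
    then show "ginv (w (2*g+j)) * (xs @ [z]) ! j * w (2*g+j) = ginv (w' (2*g+j)) * (xs @ [z]) ! j * w' (2*g+j)"
      using assms by simp
  qed
  moreover have "map (\<lambda>i. gcomm (w (2*i)) (w (2*i+1))) [0..<g] = map (\<lambda>i. gcomm (w' (2*i)) (w' (2*i+1))) [0..<g]"
    by (rule map_cong[OF refl]) (simp add: assms)
  ultimately show ?thesis unfolding PrF_def by (simp only:)
qed

lemma PrF_split: "PrF xs g w z = prod_list (map (\<lambda>j. ginv (w (2*g+j)) * xs ! j * w (2*g+j)) [0..<length xs])
     * (ginv (w (2*g + length xs)) * z * w (2*g + length xs)) * prod_list (map (\<lambda>i. gcomm (w (2*i)) (w (2*i+1))) [0..<g])"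
proof -
  have "map (\<lambda>j. ginv (w (2*g+j)) * (xs @ [z]) ! j * w (2*g+j)) [0..<length xs]
      = map (\<lambda>j. ginv (w (2*g+j)) * xs ! j * w (2*g+j)) [0..<length xs]"
    by (rule map_cong[OF refl]) (auto simp: nth_append)
  moreover have "[0..<Suc (length xs)] = [0..<length xs] @ [length xs]" by simp
  ultimately show ?thesis unfolding PrF_def by (simp only: map_append prod_list.append) (simp add: mult.assoc)
qed

context hkctx begin

lemma mu_borel: "f \<in> M \<rightarrow>\<^sub>M \<mu> \<Longrightarrow> f \<in> M \<rightarrow>\<^sub>M borel"
proof -
  have "(\<lambda>x. x) \<in> restrict_space borel G \<rightarrow>\<^sub>M borel" by (rule borel_measurable_continuous_on_restrict[OF continuous_on_id])
  then have "(\<lambda>x. x) \<in> \<mu> \<rightarrow>\<^sub>M borel" using measurable_cong_sets[OF sets_mu refl] by blast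
  moreover assume "f \<in> M \<rightarrow>\<^sub>M \<mu>"
  ultimately show ?thesis using measurable_compose by blast
qed

lemma PrF_G: assumes xs: "set xs \<subseteq> G" and w: "\<And>j. j < 2*g + Suc (length xs) \<Longrightarrow> w j \<in> G" and z: "z \<in> G"
  shows "prod_list (map (\<lambda>j. ginv (w (2*g+j)) * xs ! j * w (2*g+j)) [0..<length xs]) \<in> G"
    "prod_list (map (\<lambda>i. gcomm (w (2*i)) (w (2*i+1))) [0..<g]) \<in> G"
    "PrF xs g w z \<in> G"
proof -
  show A: "prod_list (map (\<lambda>j. ginv (w (2*g+j)) * xs ! j * w (2*g+j)) [0..<length xs]) \<in> G"
    using xs by (intro prod_list_G) (auto intro!: mult_G ginv(1) w)
  show C: "prod_list (map (\<lambda>i. gcomm (w (2*i)) (w (2*i+1))) [0..<g]) \<in> G"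
    by (intro prod_list_G) (auto intro!: gcomm_G w)
  show "PrF xs g w z \<in> G" unfolding PrF_split
    by (intro mult_G A C ginv(1) w z) auto
qed

lemma PW: assumes xs: "set xs \<subseteq> G" and w: "\<And>j. j < 2*g + Suc (length xs) \<Longrightarrow> w j \<in> G"
  and x: "x \<in> G" and T: "T > 0" and T': "T' > 0"
  shows "(\<integral>z. p T (ginv x * z) * p T' (PrF xs g w z) \<partial>\<mu>) = p (T + T') (PrF xs g w x)"
proof -
  define A where "A = prod_list (map (\<lambda>j. ginv (w (2*g+j)) * xs ! j * w (2*g+j)) [0..<length xs])"
  define C where "C = prod_list (map (\<lambda>i. gcomm (w (2*i)) (w (2*i+1))) [0..<g])"
  define y where "y = w (2*g + length xs)"
  have AG: "A \<in> G" and CG: "C \<in> G" using PrF_G[OF xs w x] unfolding A_def C_def by auto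
  have yG: "y \<in> G" unfolding y_def by (rule w) simp
  have iy: "ginv y \<in> G" using ginv(1)[OF yG] .
  have dec: "PrF xs g w z = A * (ginv y * z * y) * C" for z unfolding PrF_split A_def C_def y_def ..
  define u where "u = y * C * A * ginv y"
  have uG: "u \<in> G" unfolding u_def by (intro mult_G yG CG AG iy)
  have "(\<integral>z. p T (ginv x * z) * p T' (PrF xs g w z) \<partial>\<mu>) = (\<integral>z. p T (ginv x * z) * p T' (z * u) \<partial>\<mu>)"
  proof (rule Bochner_Integration.integral_cong[OF refl])
    fix z assume "z \<in> space \<mu>"
    then have z: "z \<in> G" using space_mu by simp
    have "p T' (PrF xs g w z) = p T' ((A * ginv y) * (z * y * C))" unfolding dec by (simp add: mult.assoc)
    also have "\<dots> = p T' ((z * y * C) * (A * ginv y))"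
      by (rule central[OF T']) (intro mult_G AG iy z yG CG)+
    also have "\<dots> = p T' (z * u)" unfolding u_def by (simp add: mult.assoc)
    finally show "p T (ginv x * z) * p T' (PrF xs g w z) = p T (ginv x * z) * p T' (z * u)" by simp
  qed
  also have "\<dots> = p (T + T') (u * x)" by (rule K[OF x uG T T'])
  also have "\<dots> = p (T + T') ((y * C * A) * (ginv y * x))" unfolding u_def by (simp add: mult.assoc)
  also have "\<dots> = p (T + T') ((ginv y * x) * (y * C * A))"
    using T T' by (intro central) (auto intro!: mult_G yG CG AG iy x)
  also have "\<dots> = p (T + T') ((ginv y * x * y * C) * A)" by (simp add: mult.assoc)
  also have "\<dots> = p (T + T') (A * (ginv y * x * y * C))"
    using T T' by (intro central[symmetric]) (auto intro!: mult_G yG CG AG iy x)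
  also have "\<dots> = p (T + T') (PrF xs g w x)" unfolding dec by (simp add: mult.assoc)
  finally show ?thesis .
qed

end



context hkctx begin

lemma integrand_meas:
  assumes xs: "set xs \<subseteq> G" and x: "x \<in> G" and T: "T > 0" and T': "T' > 0"
  shows "(\<lambda>(z,w). p T (ginv x * z) * p T' (PrF xs g w z))
           \<in> borel_measurable (\<mu> \<Otimes>\<^sub>M Pi\<^sub>M {..<2*g + Suc (length xs)} (\<lambda>_. \<mu>))"
proof -
  define N where "N = 2*g + Suc (length xs)"
  define P where "P = Pi\<^sub>M {..<N} (\<lambda>_. \<mu>)"
  define f where "f j \<omega> = (if j < N then snd \<omega> j else fst \<omega>)" for j and \<omega> :: "'a \<times> (nat \<Rightarrow> 'a)"
  define \<Phi> where "\<Phi> c = p T (ginv x * c N) * p T' (PrF xs g c (c N))" for c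
  have spc: "\<omega> \<in> space (\<mu> \<Otimes>\<^sub>M P) \<Longrightarrow> fst \<omega> \<in> G \<and> (\<forall>j<N. snd \<omega> j \<in> G)" for \<omega>
  proof -
    assume "\<omega> \<in> space (\<mu> \<Otimes>\<^sub>M P)"
    then have a: "fst \<omega> \<in> space \<mu>" "snd \<omega> \<in> space P" unfolding space_pair_measure by (auto simp: mem_Times_iff)
    then have "snd \<omega> \<in> (\<Pi>\<^sub>E j\<in>{..<N}. space \<mu>)" unfolding P_def space_PiM by simp
    then have "\<forall>j<N. snd \<omega> j \<in> space \<mu>" by (auto dest: PiE_mem)
    then show ?thesis using a(1) unfolding space_mu by simp
  qed
  have 1: "(\<lambda>\<omega>. \<Phi> (\<lambda>j. f j \<omega>)) \<in> borel_measurable (\<mu> \<Otimes>\<^sub>M P)"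
  proof (rule meas_cont[OF cG, of "Suc N"])
    fix j assume j: "j < Suc N"
    show "f j \<in> \<mu> \<Otimes>\<^sub>M P \<rightarrow>\<^sub>M borel"
    proof (cases "j < N")
      case True
      have "(\<lambda>\<omega>. snd \<omega> j) \<in> \<mu> \<Otimes>\<^sub>M P \<rightarrow>\<^sub>M \<mu>"
        using measurable_compose[OF measurable_snd measurable_component_singleton[of j "{..<N}" "\<lambda>_. \<mu>"]] True
        unfolding P_def by simp
      then show ?thesis using True mu_borel unfolding f_def by simp
    next
      case False
      then show ?thesis using mu_borel[OF measurable_fst] unfolding f_def by simp
    qed
    fix \<omega> assume "\<omega> \<in> space (\<mu> \<Otimes>\<^sub>M P)"
    then show "f j \<omega> \<in> G" using spc unfolding f_def by auto
  next
    fix c :: "nat \<Rightarrow> nat \<Rightarrow> 'a" and v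
    assume cG': "\<And>j k. j < Suc N \<Longrightarrow> c k j \<in> G" and vG: "\<And>j. j < Suc N \<Longrightarrow> v j \<in> G"
      and lim: "\<And>j. j < Suc N \<Longrightarrow> (\<lambda>k. c k j) \<longlonglongrightarrow> v j"
    have Gc: "Gs (\<lambda>k. c k j) (v j)" if "j < Suc N" for j using cG' vG lim that unfolding Gs_def by auto
    have Gx: "Gs (\<lambda>k. ginv x * c k N) (ginv x * v N)"
      by (rule Gs_mult[OF Gs_const[OF ginv(1)[OF x]] Gc]) simp
    have Gn: "Gs (\<lambda>k. (xs @ [c k N]) ! j) ((xs @ [v N]) ! j)" if "j \<in> set [0..<Suc (length xs)]" for j
    proof (cases "j < length xs")
      case True
      then show ?thesis using xs by (auto simp: nth_append intro!: Gs_const)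
    next
      case False
      then have "j = length xs" using that by auto
      then show ?thesis using Gc[of N] by simp
    qed
    have GP: "Gs (\<lambda>k. PrF xs g (c k) (c k N)) (PrF xs g v (v N))"
      unfolding PrF_def prod_list.append
    proof (rule Gs_mult)
      show "Gs (\<lambda>k. \<Prod>j\<leftarrow>[0..<Suc (length xs)]. ginv (c k (2 * g + j)) * (xs @ [c k N]) ! j * c k (2 * g + j))
           (\<Prod>j\<leftarrow>[0..<Suc (length xs)]. ginv (v (2 * g + j)) * (xs @ [v N]) ! j * v (2 * g + j))"
      proof (rule Gs_prod_list)
        fix j assume j: "j \<in> set [0..<Suc (length xs)]"
        then have "2 * g + j < Suc N" unfolding N_def by auto
        then show "Gs (\<lambda>k. ginv (c k (2 * g + j)) * (xs @ [c k N]) ! j * c k (2 * g + j))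
              (ginv (v (2 * g + j)) * (xs @ [v N]) ! j * v (2 * g + j))"
          by (intro Gs_mult Gs_ginv Gc Gn j)
      qed
      show "Gs (\<lambda>k. \<Prod>i\<leftarrow>[0..<g]. gcomm (c k (2 * i)) (c k (2 * i + 1)))
           (\<Prod>i\<leftarrow>[0..<g]. gcomm (v (2 * i)) (v (2 * i + 1)))"
      proof (rule Gs_prod_list)
        fix i assume i: "i \<in> set [0..<g]"
        then have "2 * i < Suc N" "2 * i + 1 < Suc N" unfolding N_def by auto
        then show "Gs (\<lambda>k. gcomm (c k (2 * i)) (c k (2 * i + 1))) (gcomm (v (2 * i)) (v (2 * i + 1)))"
          by (intro Gs_gcomm Gc)
      qed
    qed
    show "(\<lambda>k. \<Phi> (c k)) \<longlonglongrightarrow> \<Phi> v"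
      unfolding \<Phi>_def by (intro tendsto_mult Gs_p[OF T Gx] Gs_p[OF T' GP])
  qed
  have 2: "\<Phi> (\<lambda>j. f j \<omega>) = (\<lambda>(z,w). p T (ginv x * z) * p T' (PrF xs g w z)) \<omega>" for \<omega>
  proof -
    obtain z w where \<omega>: "\<omega> = (z, w)" by fastforce
    have "PrF xs g (\<lambda>j. f j \<omega>) z = PrF xs g w z"
      by (rule PrF_cong) (simp add: f_def \<omega> N_def)
    then show ?thesis unfolding \<Phi>_def using \<omega> by (simp add: f_def N_def)
  qed
  show ?thesis using 1 unfolding 2 P_def N_def .
qed

lemma main:
  assumes xs: "set xs \<subseteq> G" and x: "x \<in> G" and T: "T > 0" and T': "T' > 0"
  shows "heat_sg \<mu> p T (\<lambda>z. Zfun \<mu> p g T' (xs @ [z])) x = Zfun \<mu> p g (T + T') (xs @ [x])"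
proof -
  define N where "N = 2*g + Suc (length xs)"
  define P where "P = Pi\<^sub>M {..<N} (\<lambda>_. \<mu>)"
  have probP: "prob_space P" unfolding P_def by (intro prob_space_PiM prob_mu)
  have pair: "pair_sigma_finite \<mu> P"
    by (intro pair_sigma_finite.intro prob_space_imp_sigma_finite prob_mu probP)
  have finpair: "finite_measure (\<mu> \<Otimes>\<^sub>M P)"
    using prob_space_pair[OF prob_mu probP] by (simp add: prob_space_def)
  have spP: "w \<in> space P \<Longrightarrow> j < N \<Longrightarrow> w j \<in> G" for w j
  proof -
    assume "w \<in> space P" "j < N"
    then have "w \<in> (\<Pi>\<^sub>E j\<in>{..<N}. space \<mu>)" unfolding P_def space_PiM by simp
    then show "w j \<in> G" using \<open>j < N\<close> space_mu by (auto dest: PiE_mem)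
  qed
  obtain B1 where B1: "\<And>y. y \<in> G \<Longrightarrow> \<bar>p T y\<bar> \<le> B1" using cont_bound[OF cont_fix[OF cont0 T]] by blast
  obtain B2 where B2: "\<And>y. y \<in> G \<Longrightarrow> \<bar>p T' y\<bar> \<le> B2" using cont_bound[OF cont_fix[OF cont0 T']] by blast
  have int: "integrable (\<mu> \<Otimes>\<^sub>M P) (\<lambda>(z,w). p T (ginv x * z) * p T' (PrF xs g w z))"
  proof (rule finite_measure.integrable_const_bound[OF finpair, where B="B1 * B2"])
    show "(\<lambda>(z,w). p T (ginv x * z) * p T' (PrF xs g w z)) \<in> borel_measurable (\<mu> \<Otimes>\<^sub>M P)"
      using integrand_meas[OF xs x T T'] unfolding P_def N_def .
    show "AE \<omega> in \<mu> \<Otimes>\<^sub>M P. norm ((\<lambda>(z,w). p T (ginv x * z) * p T' (PrF xs g w z)) \<omega>) \<le> B1 * B2"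
    proof (rule AE_I2)
      fix \<omega> assume "\<omega> \<in> space (\<mu> \<Otimes>\<^sub>M P)"
      then obtain z w where \<omega>: "\<omega> = (z, w)" "z \<in> G" "w \<in> space P" by (auto simp: space_pair_measure space_mu)
      have wG: "\<And>j. j < 2*g + Suc (length xs) \<Longrightarrow> w j \<in> G" using spP[OF \<omega>(3)] unfolding N_def by auto
      have a: "\<bar>p T (ginv x * z)\<bar> \<le> B1" by (intro B1 mult_G ginv(1) x \<omega>(2))
      have b: "\<bar>p T' (PrF xs g w z)\<bar> \<le> B2" by (intro B2 PrF_G(3)[OF xs wG \<omega>(2)])
      have "\<bar>p T (ginv x * z) * p T' (PrF xs g w z)\<bar> \<le> B1 * B2"
        unfolding abs_mult by (rule mult_mono[OF a b]) (use a in auto)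
      then show "norm ((\<lambda>(z,w). p T (ginv x * z) * p T' (PrF xs g w z)) \<omega>) \<le> B1 * B2"
        using \<omega> by simp
    qed
  qed
  have "heat_sg \<mu> p T (\<lambda>z. Zfun \<mu> p g T' (xs @ [z])) x
      = (\<integral>z. p T (ginv x * z) * (\<integral>w. p T' (PrF xs g w z) \<partial>P) \<partial>\<mu>)"
    unfolding heat_sg_def Zfun_eq P_def N_def ..
  also have "\<dots> = (\<integral>z. (\<integral>w. p T (ginv x * z) * p T' (PrF xs g w z) \<partial>P) \<partial>\<mu>)"
    by simp
  also have "\<dots> = (\<integral>w. (\<integral>z. p T (ginv x * z) * p T' (PrF xs g w z) \<partial>\<mu>) \<partial>P)"
    using pair_sigma_finite.Fubini_integral[OF pair int] by simp
  also have "\<dots> = (\<integral>w. p (T + T') (PrF xs g w x) \<partial>P)"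
  proof (rule Bochner_Integration.integral_cong[OF refl])
    fix w assume w: "w \<in> space P"
    have wG: "\<And>j. j < 2*g + Suc (length xs) \<Longrightarrow> w j \<in> G" using spP[OF w] unfolding N_def by auto
    show "(\<integral>z. p T (ginv x * z) * p T' (PrF xs g w z) \<partial>\<mu>) = p (T + T') (PrF xs g w x)"
      by (rule PW[OF xs wG x T T'])
  qed
  also have "\<dots> = Zfun \<mu> p g (T + T') (xs @ [x])"
    unfolding Zfun_eq P_def N_def ..
  finally show ?thesis .
qed

end

theorem mainTheorem8:
  fixes G :: "'a::{real_normed_algebra_1,banach} set"
    and \<mu> :: "'a measure" and B :: "'a \<Rightarrow> 'a \<Rightarrow> real"
    and E :: "nat \<Rightarrow> 'a" and n :: nat
    and p :: "real \<Rightarrow> 'a \<Rightarrow> real"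
    and g :: nat and T T' :: real and xs :: "'a list" and x :: 'a
  assumes "compact_connected_lie_group G"
    and "haar_prob G \<mu>"
    and "biinv_metric G B"
    and "orthonormal_basis G B E n"
    and "volume_one \<mu> E n"
    and "heat_kernel G \<mu> E n p"
    and "T > 0" and "T' > 0"
    and "set xs \<subseteq> G" and "x \<in> G"
  shows "heat_sg \<mu> p T (\<lambda>z. Zfun \<mu> p g T' (xs @ [z])) x = Zfun \<mu> p g (T + T') (xs @ [x])"
proof -
  interpret hkctx G \<mu> E n p
  proof
    show "subgroup_of_units G" "compact G"
      using assms(1) unfolding compact_connected_lie_group_def by auto
    show "haar_prob G \<mu>" "heat_kernel G \<mu> E n p" using assms(2,6) by auto
    show "\<And>i. i < n \<Longrightarrow> E i \<in> lie_alg G" using assms(4) unfolding orthonormal_basis_def by auto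
  qed
  show ?thesis by (rule main) (use assms in auto)
qed



end
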